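(* Let $(Q,P)$ be a weakly quasi-lattice ordered group and let $\Lambda$ be a $P$-graph with $\mathrm{FA}(\Lambda)\neq\emptyset$. For $\mu,\nu\in\mathrm{FA}(\Lambda)$ and finite $J,K\subseteq\Lambda$, let $$Z(\mu\setminus J,\nu\setminus K)=\{(x,d(\mu)d(\nu)^{-1},y)\in\mathcal{G}(\Lambda): \mu\in x,\ x\cap J=\emptyset,\ \nu\in y,\ y\cap K=\emptyset,\ x\cdot d(\mu)=y\cdot d(\nu)\}.$$ The collection of all such sets, where $\mu,\nu\in\mathrm{FA}(\Lambda)$ and $J,K$ are finite subsets of $\Lambda$, is a basis for the topology on $\mathcal{G}(\Lambda)$.
   Context: $(Q,P)$ weakly quasi-lattice ordered: $Q$ a discrete group, $P\subseteq Q$ a subsemigroup containing the identity $e$ with $P\cap P^{-1}=\{e\}$, and, with $p\le r$ meaning $pq=r$ for some $q\in P$, any two elements of $P$ with a common upper bound have a least common upper bound. A $P$-graph is a countable small category $\Lambda$ (range/source $r,s$) with a functor $d:\Lambda\to P$ with unique factorisation (if $d(\lambda)=pq$ there are unique $\mu,\nu$ with $\lambda=\mu\nu$, $d(\mu)=p$, $d(\nu)=q$). Write $\Lambda^m=d^{-1}(m)$, $\lambda\Lambda=\{\lambda\mu: s(\lambda)=r(\mu)\}$, $\mu\preceq\lambda$ iff $\lambda\in\mu\Lambda$. $\mathrm{FA}(\Lambda)$ is the set of $\lambda$ such that for all $\mu\in\lambda\Lambda,\nu\in\Lambda$ there is finite $J\subseteq\Lambda$ with $\mu\Lambda\cap\nu\Lambda=\bigcup_{\kappa\in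 J}\kappa\Lambda$. A filter is a nonempty hereditary and directed subset of $\Lambda$ (w.r.t. $\preceq$). $\mathcal{P}(\Lambda)$ has the product topology from $\{0,1\}^\Lambda$ (basis $\{x: K_1\subseteq x\subseteq\Lambda\setminus K_2\}$, $K_1,K_2$ finite); subsets have the subspace topology. Path space $\mathcal{X}(\Lambda)=\{x\text{ filter}: x\cap\mathrm{FA}(\Lambda)\neq\emptyset\}$. For $x\in\mathcal{X}(\Lambda)$, $m\in P$ with $x\cap\Lambda^m\neq\emptyset$ (write $x\in\mathrm{dom}(m)$), $x(0,m)$ is the unique element of $x\cap\Lambda^m$ and $x\cdot m=\{\mu: x(0,m)\mu\in x\}$. The path groupoid $\mathcal{G}(\Lambda)$ is the set of $(x,q,y)\in\mathcal{X}(\Lambda)\times Q\times\mathcal{X}(\Lambda)$ such that $q=mn^{-1}$, $x\in\mathrm{dom}(m)$, $y\in\mathrm{dom}(n)$, $x\cdot m=y\cdot n$ for some $m,n\in P$, with product $(x,q,y)(y,r,z)=(x,qr,z)$, inverse $(y,q^{-1},x)$, and the topology generated by the basis of sets $\{(x,mn^{-1},y)\in\mathcal{G}(\Lambda): x\in U,\ y\in V,\ x\in\mathrm{dom}(m),\ y\in\mathrm{dom}(n),\ x\cdot m=y\cdot n\}$ for $m,n\in P$ and $U,V\subseteq\mathcal{X}(\Lambda)$ open. *)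

theory Defs
  imports "HOL-Analysis.Analysis"
begin

text \<open>The discrete group Q is a type of class group_add; the group operation
  is written additively (not assumed commutative): pq is p + q, q^-1 is -q,
  and m n^-1 is m - n. The identity e is 0.\<close>

definition pleq :: "'q::group_add set \<Rightarrow> 'q \<Rightarrow> 'q \<Rightarrow> bool" where
  "pleq P p r \<longleftrightarrow> (\<exists>q\<in>P. p + q = r)"

definition wqlo :: "'q::group_add set \<Rightarrow> bool" where
  "wqlo P \<longleftrightarrow> 0 \<in> P \<and> (\<forall>p\<in>P. \<forall>q\<in>P. p + q \<in> P) \<and> P \<inter> uminus ` P = {0} \<and>
     (\<forall>p\<in>P. \<forall>q\<in>P. (\<exists>u\<in>P. pleq P p u \<and> pleq P q u) \<longrightarrow>
        (\<exists>l\<in>P. pleq P p l \<and> pleq P q l \<and> (\<forall>u\<in>P. pleq P p u \<and> pleq P q u \<longrightarrow> pleq P l u)))"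

record ('a, 'o, 'q) pgraph =
  Mor :: "'a set"
  Obj :: "'o set"
  src :: "'a \<Rightarrow> 'o"
  rng :: "'a \<Rightarrow> 'o"
  idm :: "'o \<Rightarrow> 'a"
  comp :: "'a \<Rightarrow> 'a \<Rightarrow> 'a"
  deg :: "'a \<Rightarrow> 'q"

definition is_pgraph :: "'q::group_add set \<Rightarrow> ('a, 'o, 'q) pgraph \<Rightarrow> bool" where
  "is_pgraph P L \<longleftrightarrow>
     countable (Mor L) \<and> countable (Obj L) \<and>
     (\<forall>v\<in>Obj L. idm L v \<in> Mor L \<and> src L (idm L v) = v \<and> rng L (idm L v) = v) \<and>
     (\<forall>a\<in>Mor L. src L a \<in> Obj L \<and> rng L a \<in> Obj L) \<and>
     (\<forall>a\<in>Mor L. \<forall>b\<in>Mor L. src L a = rng L b \<longrightarrow>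
         comp L a b \<in> Mor L \<and> rng L (comp L a b) = rng L a \<and> src L (comp L a b) = src L b) \<and>
     (\<forall>a\<in>Mor L. \<forall>b\<in>Mor L. \<forall>c\<in>Mor L. src L a = rng L b \<and> src L b = rng L c \<longrightarrow>
         comp L (comp L a b) c = comp L a (comp L b c)) \<and>
     (\<forall>a\<in>Mor L. comp L (idm L (rng L a)) a = a \<and> comp L a (idm L (src L a)) = a) \<and>
     (\<forall>a\<in>Mor L. deg L a \<in> P) \<and>
     (\<forall>v\<in>Obj L. deg L (idm L v) = 0) \<and>
     (\<forall>a\<in>Mor L. \<forall>b\<in>Mor L. src L a = rng L b \<longrightarrow> deg L (comp L a b) = deg L a + deg L b) \<and>
     (\<forall>a\<in>Mor L. \<forall>p\<in>P. \<forall>q\<in>P. deg L a = p + q \<longrightarrow>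
         (\<exists>!(b, c). b \<in> Mor L \<and> c \<in> Mor L \<and> src L b = rng L c \<and> a = comp L b c \<and>
                   deg L b = p \<and> deg L c = q))"

definition ext :: "('a, 'o, 'q) pgraph \<Rightarrow> 'a \<Rightarrow> 'a set" where
  "ext L a = {comp L a b | b. b \<in> Mor L \<and> src L a = rng L b}"

definition prec :: "('a, 'o, 'q) pgraph \<Rightarrow> 'a \<Rightarrow> 'a \<Rightarrow> bool" where
  "prec L m l \<longleftrightarrow> m \<in> Mor L \<and> l \<in> ext L m"

definition FA :: "('a, 'o, 'q) pgraph \<Rightarrow> 'a set" where
  "FA L = {l \<in> Mor L. \<forall>m\<in>ext L l. \<forall>n\<in>Mor L. \<exists>J. finite J \<and> J \<subseteq> Mor L \<and>
              ext L m \<inter> ext L n = (\<Union>k\<in>J. ext L k)}"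

definition is_filter :: "('a, 'o, 'q) pgraph \<Rightarrow> 'a set \<Rightarrow> bool" where
  "is_filter L x \<longleftrightarrow> x \<subseteq> Mor L \<and> x \<noteq> {} \<and>
     (\<forall>l\<in>x. \<forall>m. prec L m l \<longrightarrow> m \<in> x) \<and>
     (\<forall>l\<in>x. \<forall>m\<in>x. \<exists>n\<in>x. prec L l n \<and> prec L m n)"

definition pathsp :: "('a, 'o, 'q) pgraph \<Rightarrow> 'a set set" where
  "pathsp L = {x. is_filter L x \<and> x \<inter> FA L \<noteq> {}}"

definition indom :: "('a, 'o, 'q) pgraph \<Rightarrow> 'a set \<Rightarrow> 'q \<Rightarrow> bool" where
  "indom L x m \<longleftrightarrow> (\<exists>l\<in>x. deg L l = m)"

definition seg :: "('a, 'o, 'q) pgraph \<Rightarrow> 'a set \<Rightarrow> 'q \<Rightarrow> 'a" where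
  "seg L x m = (THE l. l \<in> x \<and> deg L l = m)"

definition shift :: "('a, 'o, 'q) pgraph \<Rightarrow> 'a set \<Rightarrow> 'q \<Rightarrow> 'a set" where
  "shift L x m = {b \<in> Mor L. src L (seg L x m) = rng L b \<and> comp L (seg L x m) b \<in> x}"

definition groupoid :: "'q::group_add set \<Rightarrow> ('a, 'o, 'q) pgraph \<Rightarrow> ('a set \<times> 'q \<times> 'a set) set" where
  "groupoid P L = {(x, q, y). x \<in> pathsp L \<and> y \<in> pathsp L \<and>
     (\<exists>m\<in>P. \<exists>n\<in>P. q = m - n \<and> indom L x m \<and> indom L y n \<and> shift L x m = shift L y n)}"

text \<open>Product topology on P(\<Lambda>) = {0,1}^\<Lambda>, via its standard basis.\<close>
definition powtop :: "('a, 'o, 'q) pgraph \<Rightarrow> 'a set topology" where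
  "powtop L = topology_generated_by
     {{x. x \<subseteq> Mor L \<and> K1 \<subseteq> x \<and> x \<subseteq> Mor L - K2} | K1 K2.
        finite K1 \<and> finite K2 \<and> K1 \<subseteq> Mor L \<and> K2 \<subseteq> Mor L}"

definition pathtop :: "('a, 'o, 'q) pgraph \<Rightarrow> 'a set topology" where
  "pathtop L = subtopology (powtop L) (pathsp L)"

definition gtop :: "'q::group_add set \<Rightarrow> ('a, 'o, 'q) pgraph \<Rightarrow> ('a set \<times> 'q \<times> 'a set) topology" where
  "gtop P L = topology_generated_by
     {{(x, m - n, y) | x y. (x, m - n, y) \<in> groupoid P L \<and> x \<in> U \<and> y \<in> V \<and>
          indom L x m \<and> indom L y n \<and> shift L x m = shift L y n} | m n U V.
        m \<in> P \<and> n \<in> P \<and> openin (pathtop L) U \<and> openin (pathtop L) V}"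

definition Zset :: "'q::group_add set \<Rightarrow> ('a, 'o, 'q) pgraph \<Rightarrow> 'a \<Rightarrow> 'a set \<Rightarrow> 'a \<Rightarrow> 'a set
                     \<Rightarrow> ('a set \<times> 'q \<times> 'a set) set" where
  "Zset P L mu J nu K = {(x, deg L mu - deg L nu, y) | x y.
      (x, deg L mu - deg L nu, y) \<in> groupoid P L \<and> mu \<in> x \<and> x \<inter> J = {} \<and> nu \<in> y \<and> y \<inter> K = {} \<and>
      shift L x (deg L mu) = shift L y (deg L nu)}"

definition is_basis_for :: "'b topology \<Rightarrow> 'b set set \<Rightarrow> bool" where
  "is_basis_for T B \<longleftrightarrow> (\<forall>b\<in>B. openin T b) \<and>
     (\<forall>W. openin T W \<longrightarrow> (\<exists>C\<subseteq>B. \<Union>C = W))"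

end

theory Submission
  imports Defs
begin

lemma pg_partC: assumes "is_pgraph P L" shows "\<forall>a\<in>Mor L. \<forall>b\<in>Mor L. src L a = rng L b \<longrightarrow>
         comp L a b \<in> Mor L \<and> rng L (comp L a b) = rng L a \<and> src L (comp L a b) = src L b"
  using assms unfolding is_pgraph_def apply (elim conjE) by assumption
lemma pg_partA: assumes "is_pgraph P L" shows "(\<forall>a\<in>Mor L. \<forall>b\<in>Mor L. \<forall>c\<in>Mor L. src L a = rng L b \<and> src L b = rng L c \<longrightarrow>
         comp L (comp L a b) c = comp L a (comp L b c))"
  using assms unfolding is_pgraph_def apply (elim conjE) by assumption
lemma pg_partD: assumes "is_pgraph P L" shows "(\<forall>a\<in>Mor L. deg L a \<in> P)"
  using assms unfolding is_pgraph_def apply (elim conjE) by assumption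
lemma pg_partE: assumes "is_pgraph P L" shows "(\<forall>a\<in>Mor L. \<forall>b\<in>Mor L. src L a = rng L b \<longrightarrow> deg L (comp L a b) = deg L a + deg L b)"
  using assms unfolding is_pgraph_def apply (elim conjE) by assumption
lemma pg_partU: assumes "is_pgraph P L" shows "(\<forall>a\<in>Mor L. \<forall>p\<in>P. \<forall>q\<in>P. deg L a = p + q \<longrightarrow>
         (\<exists>!(b, c). b \<in> Mor L \<and> c \<in> Mor L \<and> src L b = rng L c \<and> a = comp L b c \<and>
                   deg L b = p \<and> deg L c = q))"
  using assms unfolding is_pgraph_def apply (elim conjE) by assumption
lemma pg_comp:
  assumes "is_pgraph P L" "a \<in> Mor L" "b \<in> Mor L" "src L a = rng L b"
  shows "comp L a b \<in> Mor L" "rng L (comp L a b) = rng L a" "src L (comp L a b) = src L b"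
        "deg L (comp L a b) = deg L a + deg L b"
  using pg_partC[OF assms(1)] pg_partE[OF assms(1)] assms(2-4) by auto

lemma pg_assoc:
  assumes "is_pgraph P L" "a \<in> Mor L" "b \<in> Mor L" "c \<in> Mor L" "src L a = rng L b" "src L b = rng L c"
  shows "comp L (comp L a b) c = comp L a (comp L b c)"
  using pg_partA[OF assms(1)] assms(2-) by blast

lemma pg_degP: "is_pgraph P L \<Longrightarrow> a \<in> Mor L \<Longrightarrow> deg L a \<in> P"
  using pg_partD by blast

lemma pg_fu:
  assumes G: "is_pgraph P L" and "b \<in> Mor L" "c \<in> Mor L" "b' \<in> Mor L" "c' \<in> Mor L"
    "src L b = rng L c" "src L b' = rng L c'" "comp L b c = comp L b' c'" "deg L b = deg L b'"
  shows "b = b' \<and> c = c'"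
proof -
  let ?a = "comp L b c"
  have a: "?a \<in> Mor L" using pg_comp[OF G] assms by blast
  have "deg L ?a = deg L b + deg L c" "deg L ?a = deg L b' + deg L c'"
    using pg_comp(4)[OF G] assms by metis+
  hence dc: "deg L c = deg L c'" using assms by simp
  define Q where "Q = (\<lambda>(b0, c0). b0 \<in> Mor L \<and> c0 \<in> Mor L \<and> src L b0 = rng L c0 \<and> ?a = comp L b0 c0 \<and>
                   deg L b0 = deg L b \<and> deg L c0 = deg L c)"
  have E: "\<exists>!bc. Q bc"
    using pg_partU[OF G, rule_format, OF a pg_degP[OF G assms(2)] pg_degP[OF G assms(3)]
          \<open>deg L ?a = deg L b + deg L c\<close>] unfolding Q_def .
  have "Q (b, c)" "Q (b', c')" using assms dc unfolding Q_def by auto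
  hence "(b, c) = (b', c')" using the1_equality[OF E] by metis
  then show ?thesis by simp
qed

lemma prec_D: "prec L m l \<Longrightarrow> \<exists>b. b \<in> Mor L \<and> src L m = rng L b \<and> l = comp L m b \<and> m \<in> Mor L"
  unfolding prec_def ext_def by blast

lemma prec_I: "m \<in> Mor L \<Longrightarrow> b \<in> Mor L \<Longrightarrow> src L m = rng L b \<Longrightarrow> prec L m (comp L m b)"
  unfolding prec_def ext_def by blast

lemma prec_Mor: "is_pgraph P L \<Longrightarrow> prec L m l \<Longrightarrow> l \<in> Mor L"
  using prec_D pg_comp by metis

lemma ext_sub:
  assumes G: "is_pgraph P L" and "prec L m l"
  shows "ext L l \<subseteq> ext L m"
proof
  fix k assume "k \<in> ext L l"
  then obtain c where c: "c \<in> Mor L" "src L l = rng L c" "k = comp L l c" unfolding ext_def by blast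
  obtain b where b: "b \<in> Mor L" "src L m = rng L b" "l = comp L m b" "m \<in> Mor L" using prec_D[OF assms(2)] by blast
  have "src L b = rng L c" using c b pg_comp[OF G] by metis
  hence "k = comp L m (comp L b c)" using pg_assoc[OF G] b c by metis
  moreover have "comp L b c \<in> Mor L" "rng L (comp L b c) = rng L b" using pg_comp[OF G] b c \<open>src L b = rng L c\<close> by metis+
  ultimately show "k \<in> ext L m" unfolding ext_def using b by auto
qed

lemma prec_trans:
  assumes G: "is_pgraph P L" and "prec L m l" "prec L l k" shows "prec L m k"
  using ext_sub[OF G assms(2)] assms unfolding prec_def by blast

lemma FA_ext:
  assumes G: "is_pgraph P L" and "l \<in> FA L" "prec L l l'" shows "l' \<in> FA L"
  using ext_sub[OF G assms(3)] assms prec_Mor[OF G assms(3)] unfolding FA_def by blast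


lemma filter_her: "is_filter L x \<Longrightarrow> l \<in> x \<Longrightarrow> prec L m l \<Longrightarrow> m \<in> x"
  unfolding is_filter_def by blast

lemma filter_Mor: "is_filter L x \<Longrightarrow> l \<in> x \<Longrightarrow> l \<in> Mor L"
  unfolding is_filter_def by blast

lemma filter_dir: "is_filter L x \<Longrightarrow> l \<in> x \<Longrightarrow> m \<in> x \<Longrightarrow> \<exists>n\<in>x. prec L l n \<and> prec L m n"
  unfolding is_filter_def by blast

lemma filter_deg_unique:
  assumes G: "is_pgraph P L" and F: "is_filter L x" and "l \<in> x" "l' \<in> x" "deg L l = deg L l'"
  shows "l = l'"
proof -
  obtain n where n: "n \<in> x" "prec L l n" "prec L l' n" using filter_dir[OF F assms(3,4)] by blast
  obtain b where b: "b \<in> Mor L" "src L l = rng L b" "n = comp L l b" "l \<in> Mor L" using prec_D[OF n(2)] by blast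
  obtain b' where b': "b' \<in> Mor L" "src L l' = rng L b'" "n = comp L l' b'" "l' \<in> Mor L" using prec_D[OF n(3)] by blast
  show ?thesis using pg_fu[OF G b(4) b(1) b'(4) b'(1) b(2) b'(2)] b b' assms(5) by metis
qed

lemma seg_eq:
  assumes G: "is_pgraph P L" and F: "is_filter L x" and "l \<in> x"
  shows "seg L x (deg L l) = l"
  unfolding seg_def using filter_deg_unique[OF G F] assms(3) by (intro the_equality) auto

lemma shift_mem:
  assumes G: "is_pgraph P L" and F: "is_filter L x" and "l \<in> x"
  shows "b \<in> shift L x (deg L l) \<longleftrightarrow> b \<in> Mor L \<and> src L l = rng L b \<and> comp L l b \<in> x"
  unfolding shift_def seg_eq[OF assms] by blast

lemma filter_ub:
  assumes G: "is_pgraph P L" and F: "is_filter L x" and "finite S" "S \<subseteq> x"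
  shows "\<exists>u\<in>x. \<forall>f\<in>S. prec L f u"
  using assms(3,4)
proof (induction S rule: finite_induct)
  case empty
  then show ?case using F unfolding is_filter_def by blast
next
  case (insert f S)
  then obtain u where u: "u \<in> x" "\<forall>g\<in>S. prec L g u" by blast
  obtain n where "n \<in> x" "prec L u n" "prec L f n" using filter_dir[OF F u(1)] insert by blast
  then show ?case using u prec_trans[OF G] by blast
qed


lemma shift_fwd:
  assumes G: "is_pgraph P L" and Fx: "is_filter L x" and Fy: "is_filter L y"
    and mu: "mu \<in> x" and nu: "nu \<in> y" and a: "a \<in> Mor L" "src L mu = rng L a" "src L nu = rng L a"
    and mua: "comp L mu a \<in> x" and nua: "comp L nu a \<in> y"
    and sh: "shift L x (deg L mu) = shift L y (deg L nu)"
  shows "shift L x (deg L (comp L mu a)) = shift L y (deg L (comp L nu a))"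
proof -
  have muM: "mu \<in> Mor L" and nuM: "nu \<in> Mor L" using filter_Mor[OF Fx mu] filter_Mor[OF Fy nu] by auto
  have "b \<in> shift L x (deg L (comp L mu a)) \<longleftrightarrow> b \<in> shift L y (deg L (comp L nu a))" for b
  proof -
    have "b \<in> shift L x (deg L (comp L mu a)) \<longleftrightarrow> b \<in> Mor L \<and> src L a = rng L b \<and> comp L a b \<in> shift L x (deg L mu)"
    proof -
      have s: "src L (comp L mu a) = src L a" using pg_comp[OF G muM a(1) a(2)] by simp
      have "b \<in> Mor L \<and> src L a = rng L b \<Longrightarrow> comp L a b \<in> Mor L \<and> rng L (comp L a b) = rng L a \<and>
            comp L (comp L mu a) b = comp L mu (comp L a b)"
        using pg_comp[OF G a(1)] pg_assoc[OF G muM a(1)] a by auto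
      then show ?thesis unfolding shift_mem[OF G Fx mua] shift_mem[OF G Fx mu] s using a by auto
    qed
    also have "\<dots> \<longleftrightarrow> b \<in> Mor L \<and> src L a = rng L b \<and> comp L a b \<in> shift L y (deg L nu)" using sh by simp
    also have "\<dots> \<longleftrightarrow> b \<in> shift L y (deg L (comp L nu a))"
    proof -
      have s: "src L (comp L nu a) = src L a" using pg_comp[OF G nuM a(1) a(3)] by simp
      have "b \<in> Mor L \<and> src L a = rng L b \<Longrightarrow> comp L a b \<in> Mor L \<and> rng L (comp L a b) = rng L a \<and>
            comp L (comp L nu a) b = comp L nu (comp L a b)"
        using pg_comp[OF G a(1)] pg_assoc[OF G nuM a(1)] a by auto
      then show ?thesis unfolding shift_mem[OF G Fy nua] shift_mem[OF G Fy nu] s using a by auto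
    qed
    finally show ?thesis .
  qed
  then show ?thesis by blast
qed

lemma shift_bwd1:
  assumes G: "is_pgraph P L" and Fx: "is_filter L x" and Fy: "is_filter L y"
    and mu: "mu \<in> x" and nu: "nu \<in> y" and a: "a \<in> Mor L" "src L mu = rng L a" "src L nu = rng L a"
    and mua: "comp L mu a \<in> x" and nua: "comp L nu a \<in> y"
    and sh: "shift L x (deg L (comp L mu a)) = shift L y (deg L (comp L nu a))"
  shows "shift L x (deg L mu) \<subseteq> shift L y (deg L nu)"
proof
  have muM: "mu \<in> Mor L" and nuM: "nu \<in> Mor L" using filter_Mor[OF Fx mu] filter_Mor[OF Fy nu] by auto
  fix c assume "c \<in> shift L x (deg L mu)"
  hence c: "c \<in> Mor L" "src L mu = rng L c" "comp L mu c \<in> x" using shift_mem[OF G Fx mu] by auto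
  obtain w where w: "w \<in> x" "prec L (comp L mu c) w" "prec L (comp L mu a) w"
    using filter_dir[OF Fx c(3) mua] by blast
  obtain e where e: "e \<in> Mor L" "src L (comp L mu c) = rng L e" "w = comp L (comp L mu c) e"
    using prec_D[OF w(2)] by blast
  obtain f where f: "f \<in> Mor L" "src L (comp L mu a) = rng L f" "w = comp L (comp L mu a) f"
    using prec_D[OF w(3)] by blast
  have ce: "src L c = rng L e" using e pg_comp[OF G muM c(1) c(2)] by simp
  have af: "src L a = rng L f" using f pg_comp[OF G muM a(1) a(2)] by simp
  have w1: "w = comp L mu (comp L c e)" using pg_assoc[OF G muM c(1) e(1) c(2) ce] e by simp
  have w2: "w = comp L mu (comp L a f)" using pg_assoc[OF G muM a(1) f(1) a(2) af] f by simp
  have s1: "src L mu = rng L (comp L c e)" using c(2) pg_comp(2)[OF G c(1) e(1) ce] by simp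
  have s2: "src L mu = rng L (comp L a f)" using a(2) pg_comp(2)[OF G a(1) f(1) af] by simp
  have "comp L c e = comp L a f"
    using pg_fu[OF G muM pg_comp(1)[OF G c(1) e(1) ce] muM pg_comp(1)[OF G a(1) f(1) af] s1 s2]
      w1 w2 by simp
  have "f \<in> shift L x (deg L (comp L mu a))" using shift_mem[OF G Fx mua] f w by auto
  hence "f \<in> shift L y (deg L (comp L nu a))" using sh by simp
  hence "comp L (comp L nu a) f \<in> y" using shift_mem[OF G Fy nua] by auto
  moreover have "comp L (comp L nu a) f = comp L nu (comp L a f)"
    using pg_assoc[OF G nuM a(1) f(1) a(3) af] .
  moreover have "comp L nu (comp L c e) = comp L (comp L nu c) e"
    using pg_assoc[OF G nuM c(1) e(1) _ ce] a(3) c(2) a(2) by simp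
  moreover have "prec L (comp L nu c) (comp L (comp L nu c) e)"
    apply (rule prec_I)
    using pg_comp[OF G nuM c(1)] a c e ce by auto
  ultimately have "comp L (comp L nu c) e \<in> y"
    using \<open>comp L c e = comp L a f\<close> by simp
  hence "comp L nu c \<in> y"
    using filter_her[OF Fy _ \<open>prec L (comp L nu c) (comp L (comp L nu c) e)\<close>] by simp
  then show "c \<in> shift L y (deg L nu)" using shift_mem[OF G Fy nu] c a by auto
qed

lemma shift_bwd:
  assumes G: "is_pgraph P L" and Fx: "is_filter L x" and Fy: "is_filter L y"
    and mu: "mu \<in> x" and nu: "nu \<in> y" and a: "a \<in> Mor L" "src L mu = rng L a" "src L nu = rng L a"
    and mua: "comp L mu a \<in> x" and nua: "comp L nu a \<in> y"
    and sh: "shift L x (deg L (comp L mu a)) = shift L y (deg L (comp L nu a))"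
  shows "shift L x (deg L mu) = shift L y (deg L nu)"
  using shift_bwd1[OF G Fx Fy mu nu a mua nua sh] shift_bwd1[OF G Fy Fx nu mu a(1,3,2) nua mua sh[symmetric]]
  by blast



lemma grp_cancel: "(m + c) - (n + c) = m - (n::'q::group_add)"
  by (simp only: diff_conv_add_uminus minus_add add.assoc add_minus_cancel)

lemma Zset_mem: "(x, q, y) \<in> Zset P L mu J nu K \<longleftrightarrow> q = deg L mu - deg L nu \<and> (x,q,y) \<in> groupoid P L \<and>
   mu \<in> x \<and> x \<inter> J = {} \<and> nu \<in> y \<and> y \<inter> K = {} \<and> shift L x (deg L mu) = shift L y (deg L nu)"
  unfolding Zset_def by auto

lemma groupoid_filters: "(x,q,y) \<in> groupoid P L \<Longrightarrow> is_filter L x \<and> is_filter L y"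
  unfolding groupoid_def pathsp_def by auto

lemma Z_sub:
  assumes G: "is_pgraph P L" and M: "mu \<in> Mor L" "nu \<in> Mor L" and a: "a \<in> Mor L" "src L mu = rng L a" "src L nu = rng L a"
    and JK: "J \<subseteq> J'" "K \<subseteq> K'"
  shows "Zset P L (comp L mu a) J' (comp L nu a) K' \<subseteq> Zset P L mu J nu K"
proof clarify
  fix x q y assume "(x, q, y) \<in> Zset P L (comp L mu a) J' (comp L nu a) K'"
  hence z: "q = deg L (comp L mu a) - deg L (comp L nu a)" "(x,q,y) \<in> groupoid P L"
    "comp L mu a \<in> x" "x \<inter> J' = {}" "comp L nu a \<in> y" "y \<inter> K' = {}"
    "shift L x (deg L (comp L mu a)) = shift L y (deg L (comp L nu a))"
    unfolding Zset_mem by auto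
  have F: "is_filter L x" "is_filter L y" using groupoid_filters[OF z(2)] by auto
  have mux: "mu \<in> x" using filter_her[OF F(1) z(3) prec_I[OF M(1) a(1) a(2)]] .
  have nuy: "nu \<in> y" using filter_her[OF F(2) z(5) prec_I[OF M(2) a(1) a(3)]] .
  have "deg L (comp L mu a) - deg L (comp L nu a) = deg L mu - deg L nu"
    by (simp only: pg_comp(4)[OF G M(1) a(1,2)] pg_comp(4)[OF G M(2) a(1,3)] grp_cancel)
  hence q: "q = deg L mu - deg L nu" using z(1) by simp
  have "shift L x (deg L mu) = shift L y (deg L nu)"
    using shift_bwd[OF G F mux nuy a z(3) z(5) z(7)] .
  then show "(x, q, y) \<in> Zset P L mu J nu K" unfolding Zset_mem using q z mux nuy JK by auto
qed

lemma Z_in: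
  assumes G: "is_pgraph P L" and Z: "(x, q, y) \<in> Zset P L mu J nu K"
    and a: "a \<in> Mor L" "src L mu = rng L a" "src L nu = rng L a"
    and xa: "comp L mu a \<in> x" and ya: "comp L nu a \<in> y" and d: "x \<inter> J' = {}" "y \<inter> K' = {}"
  shows "(x, q, y) \<in> Zset P L (comp L mu a) J' (comp L nu a) K'"
proof -
  have z: "q = deg L mu - deg L nu" "(x,q,y) \<in> groupoid P L"
    "mu \<in> x" "nu \<in> y" "shift L x (deg L mu) = shift L y (deg L nu)"
    using Z unfolding Zset_mem by auto
  have F: "is_filter L x" "is_filter L y" using groupoid_filters[OF z(2)] by auto
  have M: "mu \<in> Mor L" "nu \<in> Mor L" using filter_Mor[OF F(1) z(3)] filter_Mor[OF F(2) z(4)] by auto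
  have "deg L (comp L mu a) - deg L (comp L nu a) = deg L mu - deg L nu"
    by (simp only: pg_comp(4)[OF G M(1) a(1,2)] pg_comp(4)[OF G M(2) a(1,3)] grp_cancel)
  hence q: "q = deg L (comp L mu a) - deg L (comp L nu a)" using z(1) by simp
  have "shift L x (deg L (comp L mu a)) = shift L y (deg L (comp L nu a))"
    using shift_fwd[OF G F z(3) z(4) a xa ya z(5)] .
  then show ?thesis unfolding Zset_mem using q z d xa ya by auto
qed



lemma grp3: "q = m - n \<Longrightarrow> n + a = - q + (m + (a::'q::group_add))"
proof -
  assume "q = m - n"
  hence "- q + m = n" by (simp only: minus_diff_eq diff_add_cancel)
  hence "n + a = (- q + m) + a" by simp
  thus ?thesis by (simp only: add.assoc)
qed

lemma Z_int:
  assumes G: "is_pgraph P L"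
    and Z1: "(x, q, y) \<in> Zset P L mu1 J1 nu1 K1" and Z2: "(x, q, y) \<in> Zset P L mu2 J2 nu2 K2"
    and FA: "mu1 \<in> FA L" "nu1 \<in> FA L"
  shows "\<exists>mu3 nu3. mu3 \<in> FA L \<and> nu3 \<in> FA L \<and> (x, q, y) \<in> Zset P L mu3 (J1 \<union> J2) nu3 (K1 \<union> K2) \<and>
     Zset P L mu3 (J1 \<union> J2) nu3 (K1 \<union> K2) \<subseteq> Zset P L mu1 J1 nu1 K1 \<inter> Zset P L mu2 J2 nu2 K2"
proof -
  have z1: "q = deg L mu1 - deg L nu1" "(x,q,y) \<in> groupoid P L"
    "mu1 \<in> x" "x \<inter> J1 = {}" "nu1 \<in> y" "y \<inter> K1 = {}" "shift L x (deg L mu1) = shift L y (deg L nu1)"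
    using Z1 unfolding Zset_mem by auto
  have z2: "q = deg L mu2 - deg L nu2"
    "mu2 \<in> x" "x \<inter> J2 = {}" "nu2 \<in> y" "y \<inter> K2 = {}" "shift L x (deg L mu2) = shift L y (deg L nu2)"
    using Z2 unfolding Zset_mem by auto
  have F: "is_filter L x" "is_filter L y" using groupoid_filters[OF z1(2)] by auto
  have M: "mu1 \<in> Mor L" "nu1 \<in> Mor L" "mu2 \<in> Mor L" "nu2 \<in> Mor L"
    using filter_Mor[OF F(1) z1(3)] filter_Mor[OF F(2) z1(5)] filter_Mor[OF F(1) z2(2)] filter_Mor[OF F(2) z2(4)]
    by auto
  obtain w where w: "w \<in> x" "prec L mu1 w" "prec L mu2 w" using filter_dir[OF F(1) z1(3) z2(2)] by auto
  obtain a1 where a1: "a1 \<in> Mor L" "src L mu1 = rng L a1" "w = comp L mu1 a1" using prec_D[OF w(2)] by auto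
  obtain a2 where a2: "a2 \<in> Mor L" "src L mu2 = rng L a2" "w = comp L mu2 a2" using prec_D[OF w(3)] by auto
  have "a1 \<in> shift L x (deg L mu1)" using shift_mem[OF G F(1) z1(3)] a1 w(1) by auto
  hence "a1 \<in> shift L y (deg L nu1)" using z1(7) by simp
  hence b1: "src L nu1 = rng L a1" "comp L nu1 a1 \<in> y" using shift_mem[OF G F(2) z1(5)] by auto
  have "a2 \<in> shift L x (deg L mu2)" using shift_mem[OF G F(1) z2(2)] a2 w(1) by auto
  hence "a2 \<in> shift L y (deg L nu2)" using z2(6) by simp
  hence b2: "src L nu2 = rng L a2" "comp L nu2 a2 \<in> y" using shift_mem[OF G F(2) z2(4)] by auto
  have dw1: "deg L w = deg L mu1 + deg L a1" using pg_comp(4)[OF G M(1) a1(1,2)] a1(3) by simp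
  have dw2: "deg L w = deg L mu2 + deg L a2" using pg_comp(4)[OF G M(3) a2(1,2)] a2(3) by simp
  have "deg L (comp L nu1 a1) = deg L nu1 + deg L a1" using pg_comp(4)[OF G M(2) a1(1) b1(1)] .
  also have "\<dots> = - q + deg L w" using grp3[OF z1(1)] dw1 by simp
  also have "\<dots> = deg L nu2 + deg L a2" using grp3[OF z2(1)] dw2 by simp
  also have "\<dots> = deg L (comp L nu2 a2)" using pg_comp(4)[OF G M(4) a2(1) b2(1)] by simp
  finally have "comp L nu1 a1 = comp L nu2 a2" using filter_deg_unique[OF G F(2) b1(2) b2(2)] by simp
  define nu3 where "nu3 = comp L nu1 a1"
  have FA3: "w \<in> FA L" "nu3 \<in> FA L" using FA_ext[OF G FA(1) w(2)] FA_ext[OF G FA(2) prec_I[OF M(2) a1(1) b1(1)]]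
    unfolding nu3_def by auto
  have dj: "x \<inter> (J1 \<union> J2) = {}" "y \<inter> (K1 \<union> K2) = {}" using z1 z2 by auto
  have mem: "(x, q, y) \<in> Zset P L w (J1 \<union> J2) nu3 (K1 \<union> K2)"
    using Z_in[OF G Z1 a1(1,2) b1(1) _ b1(2) dj] a1(3) w(1) unfolding nu3_def by simp
  have s1: "Zset P L w (J1 \<union> J2) nu3 (K1 \<union> K2) \<subseteq> Zset P L mu1 J1 nu1 K1"
    using Z_sub[OF G M(1,2) a1(1,2) b1(1), of J1 "J1 \<union> J2" K1 "K1 \<union> K2"] a1(3) unfolding nu3_def by auto
  have s2: "Zset P L w (J1 \<union> J2) nu3 (K1 \<union> K2) \<subseteq> Zset P L mu2 J2 nu2 K2"
    using Z_sub[OF G M(3,4) a2(1,2) b2(1), of J2 "J1 \<union> J2" K2 "K1 \<union> K2"] a2(3)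
      \<open>comp L nu1 a1 = comp L nu2 a2\<close> unfolding nu3_def by auto
  show ?thesis using FA3 mem s1 s2 by blast
qed



lemma box_gen:
  assumes "generate_topology_on {{x. x \<subseteq> Mor L \<and> K1 \<subseteq> x \<and> x \<subseteq> Mor L - K2} | K1 K2.
        finite K1 \<and> finite K2 \<and> K1 \<subseteq> Mor L \<and> K2 \<subseteq> Mor L} T" and "x \<in> T"
  shows "\<exists>K1 K2. finite K1 \<and> finite K2 \<and> K1 \<subseteq> Mor L \<and> K2 \<subseteq> Mor L \<and> K1 \<subseteq> x \<and> x \<inter> K2 = {} \<and>
     {x'. x' \<subseteq> Mor L \<and> K1 \<subseteq> x' \<and> x' \<subseteq> Mor L - K2} \<subseteq> T"
  using assms
proof (induction arbitrary: x rule: generate_topology_on.induct)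
  case Empty
  then show ?case by simp
next
  case (Int a b)
  have xa: "x \<in> a" and xb: "x \<in> b" using Int.prems by auto
  from Int.IH(1)[OF xa] obtain K1 K2 where k: "finite K1" "finite K2" "K1 \<subseteq> Mor L" "K2 \<subseteq> Mor L" "K1 \<subseteq> x" "x \<inter> K2 = {}"
     "{x'. x' \<subseteq> Mor L \<and> K1 \<subseteq> x' \<and> x' \<subseteq> Mor L - K2} \<subseteq> a" by (elim exE conjE)
  from Int.IH(2)[OF xb] obtain K1' K2' where k': "finite K1'" "finite K2'" "K1' \<subseteq> Mor L" "K2' \<subseteq> Mor L" "K1' \<subseteq> x" "x \<inter> K2' = {}"
     "{x'. x' \<subseteq> Mor L \<and> K1' \<subseteq> x' \<and> x' \<subseteq> Mor L - K2'} \<subseteq> b" by (elim exE conjE)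
  have s1: "{x'. x' \<subseteq> Mor L \<and> K1 \<union> K1' \<subseteq> x' \<and> x' \<subseteq> Mor L - (K2 \<union> K2')} \<subseteq> a"
    by (rule subset_trans[OF _ k(7)]) auto
  have s2: "{x'. x' \<subseteq> Mor L \<and> K1 \<union> K1' \<subseteq> x' \<and> x' \<subseteq> Mor L - (K2 \<union> K2')} \<subseteq> b"
    by (rule subset_trans[OF _ k'(7)]) auto
  have "finite (K1 \<union> K1') \<and> finite (K2 \<union> K2') \<and> K1 \<union> K1' \<subseteq> Mor L \<and> K2 \<union> K2' \<subseteq> Mor L \<and>
     K1 \<union> K1' \<subseteq> x \<and> x \<inter> (K2 \<union> K2') = {}" using k(1-6) k'(1-6) by auto
  moreover have "{x'. x' \<subseteq> Mor L \<and> K1 \<union> K1' \<subseteq> x' \<and> x' \<subseteq> Mor L - (K2 \<union> K2')} \<subseteq> a \<inter> b"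
    using s1 s2 by (rule Int_greatest)
  ultimately show ?case by (intro exI[of _ "K1 \<union> K1'"] exI[of _ "K2 \<union> K2'"]) (simp only: conj_assoc)
next
  case (UN K)
  from UN.prems obtain k where kK: "k \<in> K" and xk: "x \<in> k" by (elim UnionE)
  from UN.IH[OF kK xk] obtain K1 K2 where k: "finite K1" "finite K2" "K1 \<subseteq> Mor L" "K2 \<subseteq> Mor L" "K1 \<subseteq> x" "x \<inter> K2 = {}"
     "{x'. x' \<subseteq> Mor L \<and> K1 \<subseteq> x' \<and> x' \<subseteq> Mor L - K2} \<subseteq> k" by (elim exE conjE)
  have "{x'. x' \<subseteq> Mor L \<and> K1 \<subseteq> x' \<and> x' \<subseteq> Mor L - K2} \<subseteq> \<Union>K"
    by (rule subset_trans[OF k(7)]) (rule Union_upper[OF kK])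
  with k(1-6) show ?case by (intro exI[of _ K1] exI[of _ K2] conjI)
next
  case (Basis s)
  then obtain K1 K2 where "s = {x. x \<subseteq> Mor L \<and> K1 \<subseteq> x \<and> x \<subseteq> Mor L - K2}" "finite K1" "finite K2" "K1 \<subseteq> Mor L" "K2 \<subseteq> Mor L"
    by blast
  moreover have "K1 \<subseteq> x \<and> x \<inter> K2 = {}" using Basis.prems calculation(1) by auto
  ultimately show ?case by (intro exI[of _ K1] exI[of _ K2]) auto
qed

lemma pathtop_local:
  assumes "openin (pathtop L) U" "x \<in> U"
  shows "\<exists>K1 K2. finite K1 \<and> finite K2 \<and> K1 \<subseteq> Mor L \<and> K2 \<subseteq> Mor L \<and> K1 \<subseteq> x \<and> x \<inter> K2 = {} \<and>
     (\<forall>x'\<in>pathsp L. K1 \<subseteq> x' \<and> x' \<inter> K2 = {} \<longrightarrow> x' \<in> U)"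
proof -
  obtain T where T: "openin (powtop L) T" "U = T \<inter> pathsp L"
    using assms(1) unfolding pathtop_def openin_subtopology by (elim exE conjE)
  have g: "generate_topology_on {{x. x \<subseteq> Mor L \<and> K1 \<subseteq> x \<and> x \<subseteq> Mor L - K2} | K1 K2.
        finite K1 \<and> finite K2 \<and> K1 \<subseteq> Mor L \<and> K2 \<subseteq> Mor L} T"
    using T(1) unfolding powtop_def openin_topology_generated_by_iff .
  have xT: "x \<in> T" and xp: "x \<in> pathsp L" using assms(2) T(2) by auto
  from box_gen[OF g xT] obtain K1 K2 where k: "finite K1" "finite K2" "K1 \<subseteq> Mor L" "K2 \<subseteq> Mor L" "K1 \<subseteq> x" "x \<inter> K2 = {}"
     "{x'. x' \<subseteq> Mor L \<and> K1 \<subseteq> x' \<and> x' \<subseteq> Mor L - K2} \<subseteq> T" by (elim exE conjE)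
  have "\<forall>x'\<in>pathsp L. K1 \<subseteq> x' \<and> x' \<inter> K2 = {} \<longrightarrow> x' \<in> U"
  proof (intro ballI impI)
    fix x' assume x': "x' \<in> pathsp L" "K1 \<subseteq> x' \<and> x' \<inter> K2 = {}"
    have "x' \<subseteq> Mor L" using x'(1) unfolding pathsp_def is_filter_def by auto
    hence "x' \<in> {x'. x' \<subseteq> Mor L \<and> K1 \<subseteq> x' \<and> x' \<subseteq> Mor L - K2}" using x'(2) by auto
    hence "x' \<in> T" using k(7) by (rule subsetD[rotated])
    thus "x' \<in> U" using T(2) x'(1) by simp
  qed
  with k(1-6) show ?thesis by (intro exI[of _ K1] exI[of _ K2] conjI)
qed



lemma groupoid_paths: "(x,q,y) \<in> groupoid P L \<Longrightarrow> x \<in> pathsp L \<and> y \<in> pathsp L"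
  unfolding groupoid_def by auto

lemma basis_case:
  assumes G: "is_pgraph P L" and U: "openin (pathtop L) U" and V: "openin (pathtop L) V"
    and g: "(x, m - n, y) \<in> groupoid P L" "x \<in> U" "y \<in> V" "indom L x m" "indom L y n" "shift L x m = shift L y n"
  shows "\<exists>mu nu J K. mu \<in> FA L \<and> nu \<in> FA L \<and> finite J \<and> J \<subseteq> Mor L \<and> finite K \<and> K \<subseteq> Mor L \<and>
     (x, m - n, y) \<in> Zset P L mu J nu K \<and>
     Zset P L mu J nu K \<subseteq> {(x, m - n, y) | x y. (x, m - n, y) \<in> groupoid P L \<and> x \<in> U \<and> y \<in> V \<and>
          indom L x m \<and> indom L y n \<and> shift L x m = shift L y n}"
proof -
  have xp: "x \<in> pathsp L" and yp: "y \<in> pathsp L" using groupoid_paths[OF g(1)] by auto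
  have F: "is_filter L x" "is_filter L y" using xp yp unfolding pathsp_def by auto
  obtain fx where fx: "fx \<in> x" "fx \<in> FA L" using xp unfolding pathsp_def by auto
  obtain fy where fy: "fy \<in> y" "fy \<in> FA L" using yp unfolding pathsp_def by auto
  obtain sx where sx: "sx \<in> x" "deg L sx = m" using g(4) unfolding indom_def by auto
  obtain sy where sy: "sy \<in> y" "deg L sy = n" using g(5) unfolding indom_def by auto
  have sxM: "sx \<in> Mor L" and syM: "sy \<in> Mor L" using filter_Mor[OF F(1) sx(1)] filter_Mor[OF F(2) sy(1)] by auto
  have sh: "shift L x (deg L sx) = shift L y (deg L sy)" using g(6) sx sy by simp
  from pathtop_local[OF U g(2)] obtain K1 K2 where k: "finite K1" "finite K2" "K1 \<subseteq> Mor L" "K2 \<subseteq> Mor L"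
    "K1 \<subseteq> x" "x \<inter> K2 = {}" "\<forall>x'\<in>pathsp L. K1 \<subseteq> x' \<and> x' \<inter> K2 = {} \<longrightarrow> x' \<in> U" by (elim exE conjE)
  from pathtop_local[OF V g(3)] obtain K1' K2' where k': "finite K1'" "finite K2'" "K1' \<subseteq> Mor L" "K2' \<subseteq> Mor L"
    "K1' \<subseteq> y" "y \<inter> K2' = {}" "\<forall>y'\<in>pathsp L. K1' \<subseteq> y' \<and> y' \<inter> K2' = {} \<longrightarrow> y' \<in> V" by (elim exE conjE)
  have "finite (insert sy (insert fy K1'))" "insert sy (insert fy K1') \<subseteq> y" using k' sy fy by auto
  from filter_ub[OF G F(2) this] obtain w1 where w1: "w1 \<in> y" "\<forall>f\<in>insert sy (insert fy K1'). prec L f w1"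
    by (elim bexE)
  have "prec L sy w1" using w1(2) by simp
  from prec_D[OF this] obtain c1 where c1: "c1 \<in> Mor L" "src L sy = rng L c1" "w1 = comp L sy c1" by (elim exE conjE)
  have "c1 \<in> shift L y (deg L sy)" using shift_mem[OF G F(2) sy(1)] c1 w1(1) by simp
  hence "c1 \<in> shift L x (deg L sx)" using sh by simp
  hence c1x: "src L sx = rng L c1" "comp L sx c1 \<in> x" using shift_mem[OF G F(1) sx(1)] by auto
  have "finite (insert (comp L sx c1) (insert fx K1))" "insert (comp L sx c1) (insert fx K1) \<subseteq> x" using k fx c1x by auto
  from filter_ub[OF G F(1) this] obtain w2 where w2: "w2 \<in> x" "\<forall>f\<in>insert (comp L sx c1) (insert fx K1). prec L f w2"
    by (elim bexE)
  have "prec L (comp L sx c1) w2" using w2(2) by simp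
  from prec_D[OF this] obtain c2 where c2: "c2 \<in> Mor L" "src L (comp L sx c1) = rng L c2" "w2 = comp L (comp L sx c1) c2"
    by (elim exE conjE)
  have c12: "src L c1 = rng L c2" using c2(2) pg_comp(3)[OF G sxM c1(1) c1x(1)] by simp
  define c where "c = comp L c1 c2"
  have cM: "c \<in> Mor L" and rc: "rng L c = rng L c1" using pg_comp[OF G c1(1) c2(1) c12] unfolding c_def by auto
  have w2c: "w2 = comp L sx c" using c2(3) pg_assoc[OF G sxM c1(1) c2(1) c1x(1) c12] unfolding c_def by simp
  have "c \<in> shift L x (deg L sx)" using shift_mem[OF G F(1) sx(1)] cM rc c1x(1) w2c w2(1) by simp
  hence "c \<in> shift L y (deg L sy)" using sh by simp
  hence nuy: "comp L sy c \<in> y" using shift_mem[OF G F(2) sy(1)] by auto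
  have w1M: "w1 \<in> Mor L" using filter_Mor[OF F(2) w1(1)] .
  have nuw: "comp L sy c = comp L w1 c2" using c1(3) pg_assoc[OF G syM c1(1) c2(1) c1(2) c12] unfolding c_def by simp
  have sw1: "src L w1 = rng L c2" using c1(3) pg_comp(3)[OF G syM c1(1) c1(2)] c12 by simp
  have pw1: "prec L w1 (comp L sy c)" unfolding nuw by (rule prec_I[OF w1M c2(1) sw1])
  have muFA: "comp L sx c \<in> FA L" using FA_ext[OF G fx(2)] w2(2) w2c by simp
  have nuFA: "comp L sy c \<in> FA L" using FA_ext[OF G fy(2) prec_trans[OF G _ pw1]] w1(2) by simp
  have z0: "(x, m - n, y) \<in> Zset P L sx {} sy {}" unfolding Zset_mem using g(1) sx sy sh by simp
  have dj: "x \<inter> K2 = {}" "y \<inter> K2' = {}" using k(6) k'(6) .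
  have zin: "(x, m - n, y) \<in> Zset P L (comp L sx c) K2 (comp L sy c) K2'"
    using Z_in[OF G z0 cM _ _ _ nuy dj] rc c1x(1) c1(2) w2c w2(1) by simp
  have zsub: "Zset P L (comp L sx c) K2 (comp L sy c) K2' \<subseteq> Zset P L sx {} sy {}"
    using Z_sub[OF G sxM syM cM, of "{}" K2 "{}" K2'] rc c1x(1) c1(2) by simp
  have zsub2: "Zset P L (comp L sx c) K2 (comp L sy c) K2' \<subseteq> {(x, m - n, y) | x y. (x, m - n, y) \<in> groupoid P L \<and> x \<in> U \<and> y \<in> V \<and>
          indom L x m \<and> indom L y n \<and> shift L x m = shift L y n}"
  proof (rule subsetI)
    fix t assume t: "t \<in> Zset P L (comp L sx c) K2 (comp L sy c) K2'"
    obtain x' q y' where tq: "t = (x', q, y')" by (cases t) auto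
    have t1: "(x', q, y') \<in> Zset P L (comp L sx c) K2 (comp L sy c) K2'" using t tq by simp
    have t0: "(x', q, y') \<in> Zset P L sx {} sy {}" using zsub t1 by (rule subsetD)
    have z1: "mu' \<in> x'" "x' \<inter> K2 = {}" "nu' \<in> y'" "y' \<inter> K2' = {}" if "mu' = comp L sx c" "nu' = comp L sy c" for mu' nu'
      using t1 that unfolding Zset_mem by auto
    have z0': "q = m - n" "(x', q, y') \<in> groupoid P L" "sx \<in> x'" "sy \<in> y'" "shift L x' m = shift L y' n"
      using t0 sx(2) sy(2) unfolding Zset_mem by auto
    have xp': "x' \<in> pathsp L" and yp': "y' \<in> pathsp L" using groupoid_paths[OF z0'(2)] by auto
    have F': "is_filter L x'" "is_filter L y'" using xp' yp' unfolding pathsp_def by auto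
    have "K1 \<subseteq> x'"
    proof
      fix f assume "f \<in> K1"
      hence "prec L f w2" using w2(2) by simp
      thus "f \<in> x'" using filter_her[OF F'(1) z1(1)[OF w2c refl]] by simp
    qed
    hence xU: "x' \<in> U" using k(7) xp' z1(2)[OF refl refl] by simp
    have "K1' \<subseteq> y'"
    proof
      fix f assume "f \<in> K1'"
      hence "prec L f w1" using w1(2) by simp
      hence "prec L f (comp L sy c)" using prec_trans[OF G _ pw1] by simp
      thus "f \<in> y'" using filter_her[OF F'(2) z1(3)[OF refl refl]] by simp
    qed
    hence yV: "y' \<in> V" using k'(7) yp' z1(4)[OF refl refl] by simp
    have "indom L x' m" "indom L y' n" unfolding indom_def using z0' sx(2) sy(2) by auto
    thus "t \<in> {(x, m - n, y) | x y. (x, m - n, y) \<in> groupoid P L \<and> x \<in> U \<and> y \<in> V \<and>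
          indom L x m \<and> indom L y n \<and> shift L x m = shift L y n}"
      using tq z0' xU yV by simp
  qed
  show ?thesis
    by (rule exI[of _ "comp L sx c"], rule exI[of _ "comp L sy c"], rule exI[of _ K2], rule exI[of _ K2'])
       (intro conjI muFA nuFA k(2,4) k'(2,4) zin zsub2)
qed



definition gsets :: "'q::group_add set \<Rightarrow> ('a, 'o, 'q) pgraph \<Rightarrow> ('a set \<times> 'q \<times> 'a set) set set" where
  "gsets P L = {{(x, m - n, y) | x y. (x, m - n, y) \<in> groupoid P L \<and> x \<in> U \<and> y \<in> V \<and>
          indom L x m \<and> indom L y n \<and> shift L x m = shift L y n} | m n U V.
        m \<in> P \<and> n \<in> P \<and> openin (pathtop L) U \<and> openin (pathtop L) V}"

definition Bset :: "'q::group_add set \<Rightarrow> ('a, 'o, 'q) pgraph \<Rightarrow> ('a set \<times> 'q \<times> 'a set) set set" where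
  "Bset P L = {Zset P L mu J nu K | mu J nu K. mu \<in> FA L \<and> nu \<in> FA L \<and>
              finite J \<and> J \<subseteq> Mor L \<and> finite K \<and> K \<subseteq> Mor L}"

lemma gtop_eq: "gtop P L = topology_generated_by (gsets P L)"
  unfolding gtop_def gsets_def ..

lemma trip_mem: "((a, q, b) \<in> {(x, r, y) | x y. R x y}) \<longleftrightarrow> q = r \<and> R a b"
  by auto

lemma Bset_I: "mu \<in> FA L \<Longrightarrow> nu \<in> FA L \<Longrightarrow> finite J \<Longrightarrow> J \<subseteq> Mor L \<Longrightarrow> finite K \<Longrightarrow> K \<subseteq> Mor L
   \<Longrightarrow> Zset P L mu J nu K \<in> Bset P L"
  unfolding Bset_def by blast

lemma Bset_E: "Z \<in> Bset P L \<Longrightarrow> (\<And>mu J nu K. Z = Zset P L mu J nu K \<Longrightarrow> mu \<in> FA L \<Longrightarrow> nu \<in> FA L \<Longrightarrow>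
   finite J \<Longrightarrow> J \<subseteq> Mor L \<Longrightarrow> finite K \<Longrightarrow> K \<subseteq> Mor L \<Longrightarrow> thesis) \<Longrightarrow> thesis"
  unfolding Bset_def by blast

lemma main_local:
  assumes G: "is_pgraph P L" and W: "generate_topology_on (gsets P L) W" and g: "g \<in> W"
  shows "\<exists>Z\<in>Bset P L. g \<in> Z \<and> Z \<subseteq> W"
  using W g
proof (induction arbitrary: g rule: generate_topology_on.induct)
  case Empty
  then show ?case by simp
next
  case (Int a b)
  have ga: "g \<in> a" and gb: "g \<in> b" using Int.prems by auto
  from Int.IH(1)[OF ga] obtain Z1 where Z1: "Z1 \<in> Bset P L" "g \<in> Z1" "Z1 \<subseteq> a" by (elim bexE conjE)
  from Int.IH(2)[OF gb] obtain Z2 where Z2: "Z2 \<in> Bset P L" "g \<in> Z2" "Z2 \<subseteq> b" by (elim bexE conjE)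
  obtain mu1 J1 nu1 K1 where b1: "Z1 = Zset P L mu1 J1 nu1 K1" "mu1 \<in> FA L" "nu1 \<in> FA L"
    "finite J1" "J1 \<subseteq> Mor L" "finite K1" "K1 \<subseteq> Mor L" using Bset_E[OF Z1(1)] by metis
  obtain mu2 J2 nu2 K2 where b2: "Z2 = Zset P L mu2 J2 nu2 K2" "mu2 \<in> FA L" "nu2 \<in> FA L"
    "finite J2" "J2 \<subseteq> Mor L" "finite K2" "K2 \<subseteq> Mor L" using Bset_E[OF Z2(1)] by metis
  obtain x q y where gq: "g = (x, q, y)" by (cases g) auto
  have m1: "(x, q, y) \<in> Zset P L mu1 J1 nu1 K1" using Z1(2) b1(1) gq by simp
  have m2: "(x, q, y) \<in> Zset P L mu2 J2 nu2 K2" using Z2(2) b2(1) gq by simp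
  from Z_int[OF G m1 m2 b1(2,3)] obtain mu3 nu3 where z3: "mu3 \<in> FA L" "nu3 \<in> FA L"
    "(x, q, y) \<in> Zset P L mu3 (J1 \<union> J2) nu3 (K1 \<union> K2)"
    "Zset P L mu3 (J1 \<union> J2) nu3 (K1 \<union> K2) \<subseteq> Zset P L mu1 J1 nu1 K1 \<inter> Zset P L mu2 J2 nu2 K2"
    by (elim exE conjE)
  have inB: "Zset P L mu3 (J1 \<union> J2) nu3 (K1 \<union> K2) \<in> Bset P L"
    by (rule Bset_I) (use z3 b1 b2 in auto)
  have "Zset P L mu3 (J1 \<union> J2) nu3 (K1 \<union> K2) \<subseteq> a \<inter> b"
    using z3(4) Z1(3) Z2(3) b1(1) b2(1) by blast
  then show ?case using inB z3(3) gq by blast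
next
  case (UN K)
  from UN.prems obtain k where kK: "k \<in> K" and gk: "g \<in> k" by (elim UnionE)
  from UN.IH[OF kK gk] obtain Z where Z: "Z \<in> Bset P L" "g \<in> Z" "Z \<subseteq> k" by (elim bexE conjE)
  have "Z \<subseteq> \<Union>K" using Z(3) kK by blast
  then show ?case using Z(1,2) by blast
next
  case (Basis s)
  from Basis.hyps obtain m n U V where s: "s = {(x, m - n, y) | x y. (x, m - n, y) \<in> groupoid P L \<and> x \<in> U \<and> y \<in> V \<and>
          indom L x m \<and> indom L y n \<and> shift L x m = shift L y n}"
     "m \<in> P" "n \<in> P" "openin (pathtop L) U" "openin (pathtop L) V"
    unfolding gsets_def by (elim CollectE exE conjE)
  obtain x q y where gq: "g = (x, q, y)" by (cases g) auto
  have gs: "q = m - n" "(x, m - n, y) \<in> groupoid P L" "x \<in> U" "y \<in> V" "indom L x m" "indom L y n"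
     "shift L x m = shift L y n"
    using Basis.prems unfolding gq s(1) trip_mem by auto
  from basis_case[OF G s(4,5) gs(2-7)] obtain mu nu J K where
    bc: "mu \<in> FA L" "nu \<in> FA L" "finite J" "J \<subseteq> Mor L" "finite K" "K \<subseteq> Mor L"
     "(x, m - n, y) \<in> Zset P L mu J nu K"
     "Zset P L mu J nu K \<subseteq> {(x, m - n, y) | x y. (x, m - n, y) \<in> groupoid P L \<and> x \<in> U \<and> y \<in> V \<and>
          indom L x m \<and> indom L y n \<and> shift L x m = shift L y n}"
    by (elim exE conjE)
  have inB: "Zset P L mu J nu K \<in> Bset P L" using Bset_I[OF bc(1-6)] .
  have "g \<in> Zset P L mu J nu K" using bc(7) gq gs(1) by simp
  moreover have "Zset P L mu J nu K \<subseteq> s" using bc(8) s(1) by simp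
  ultimately show ?case using inB by blast
qed



lemma U_open:
  assumes "mu \<in> Mor L" "finite J" "J \<subseteq> Mor L"
  shows "openin (pathtop L) {x \<in> pathsp L. mu \<in> x \<and> x \<inter> J = {}}"
proof -
  let ?b = "{x. x \<subseteq> Mor L \<and> {mu} \<subseteq> x \<and> x \<subseteq> Mor L - J}"
  have "?b \<in> {{x. x \<subseteq> Mor L \<and> K1 \<subseteq> x \<and> x \<subseteq> Mor L - K2} | K1 K2.
        finite K1 \<and> finite K2 \<and> K1 \<subseteq> Mor L \<and> K2 \<subseteq> Mor L}"
    unfolding mem_Collect_eq
    by (rule exI[of _ "{mu}"], rule exI[of _ J]) (use assms in simp)
  hence "openin (powtop L) ?b" unfolding powtop_def by (rule topology_generated_by_Basis)
  hence o: "openin (pathtop L) (pathsp L \<inter> ?b)" unfolding pathtop_def by (rule openin_subtopology_Int2)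
  have "pathsp L \<inter> ?b = {x \<in> pathsp L. mu \<in> x \<and> x \<inter> J = {}}"
  proof (rule set_eqI)
    fix x
    show "x \<in> pathsp L \<inter> ?b \<longleftrightarrow> x \<in> {x \<in> pathsp L. mu \<in> x \<and> x \<inter> J = {}}"
    proof (cases "x \<in> pathsp L")
      case True
      hence "x \<subseteq> Mor L" unfolding pathsp_def is_filter_def by auto
      then show ?thesis using True by auto
    qed simp
  qed
  thus ?thesis using o by simp
qed

lemma Zset_gsets:
  fixes P :: "'q::group_add set" and L :: "('a, 'o, 'q) pgraph"
  assumes G: "is_pgraph P L" and "mu \<in> FA L" "nu \<in> FA L" "finite J" "J \<subseteq> Mor L" "finite K" "K \<subseteq> Mor L"
  shows "Zset P L mu J nu K \<in> gsets P L"
proof -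
  have M: "mu \<in> Mor L" "nu \<in> Mor L" using assms(2,3) unfolding FA_def by auto
  define U where "U = {x \<in> pathsp L. mu \<in> x \<and> x \<inter> J = {}}"
  define V where "V = {x \<in> pathsp L. nu \<in> x \<and> x \<inter> K = {}}"
  have oU: "openin (pathtop L) U" unfolding U_def by (rule U_open[OF M(1) assms(4,5)])
  have oV: "openin (pathtop L) V" unfolding V_def by (rule U_open[OF M(2) assms(6,7)])
  have eq: "Zset P L mu J nu K = {(x, deg L mu - deg L nu, y) | x y. (x, deg L mu - deg L nu, y) \<in> groupoid P L \<and> x \<in> U \<and> y \<in> V \<and>
          indom L x (deg L mu) \<and> indom L y (deg L nu) \<and> shift L x (deg L mu) = shift L y (deg L nu)}"
  proof (rule set_eqI)
    fix t :: "'a set \<times> 'q \<times> 'a set"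
    obtain x q y where t: "t = (x, q, y)" by (cases t) auto
    have "(x, q, y) \<in> groupoid P L \<Longrightarrow> x \<in> pathsp L \<and> y \<in> pathsp L" by (rule groupoid_paths)
    moreover have "mu \<in> x \<Longrightarrow> indom L x (deg L mu)" "nu \<in> y \<Longrightarrow> indom L y (deg L nu)"
      unfolding indom_def by auto
    ultimately show "t \<in> Zset P L mu J nu K \<longleftrightarrow> t \<in> {(x, deg L mu - deg L nu, y) | x y. (x, deg L mu - deg L nu, y) \<in> groupoid P L \<and> x \<in> U \<and> y \<in> V \<and>
          indom L x (deg L mu) \<and> indom L y (deg L nu) \<and> shift L x (deg L mu) = shift L y (deg L nu)}"
      unfolding t Zset_mem trip_mem U_def V_def by auto
  qed
  show ?thesis unfolding eq gsets_def mem_Collect_eq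
    by (rule exI[of _ "deg L mu"], rule exI[of _ "deg L nu"], rule exI[of _ U], rule exI[of _ V])
      (intro conjI refl pg_degP[OF G M(1)] pg_degP[OF G M(2)] oU oV)
qed

theorem proposition5p23:
  fixes P :: "'q::group_add set" and L :: "('a, 'o, 'q) pgraph"
  assumes "wqlo P" and "is_pgraph P L" and "FA L \<noteq> {}"
  shows "is_basis_for (gtop P L)
           {Zset P L mu J nu K | mu J nu K. mu \<in> FA L \<and> nu \<in> FA L \<and>
              finite J \<and> J \<subseteq> Mor L \<and> finite K \<and> K \<subseteq> Mor L}"
proof -
  note G = assms(2)
  have "is_basis_for (gtop P L) (Bset P L)"
    unfolding is_basis_for_def
  proof (intro conjI ballI allI impI)
    fix b assume "b \<in> Bset P L"
    then obtain mu J nu K where b: "b = Zset P L mu J nu K" "mu \<in> FA L" "nu \<in> FA L"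
      "finite J" "J \<subseteq> Mor L" "finite K" "K \<subseteq> Mor L" by (rule Bset_E) 
    have "b \<in> gsets P L" unfolding b(1) by (rule Zset_gsets[OF G b(2-7)])
    thus "openin (gtop P L) b" unfolding gtop_eq by (rule topology_generated_by_Basis)
  next
    fix W assume "openin (gtop P L) W"
    hence gW: "generate_topology_on (gsets P L) W" unfolding gtop_eq openin_topology_generated_by_iff .
    let ?C = "{Z \<in> Bset P L. Z \<subseteq> W}"
    have "\<Union>?C = W"
    proof (rule antisym)
      show "\<Union>?C \<subseteq> W" by blast
      show "W \<subseteq> \<Union>?C"
      proof
        fix g assume "g \<in> W"
        from main_local[OF G gW this] obtain Z where "Z \<in> Bset P L" "g \<in> Z" "Z \<subseteq> W" by (elim bexE conjE)
        thus "g \<in> \<Union>?C" by blast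
      qed
    qed
    thus "\<exists>C\<subseteq>Bset P L. \<Union>C = W" by (intro exI[of _ ?C]) auto
  qed
  thus ?thesis unfolding Bset_def .
qed


end
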